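(* Let $S$ be a periodic semigroup. Then $S$ is DSC if and only if $S$ is a group.
   Context: $S$ is periodic if for every $s\in S$ there are distinct $m,n\in\mathbb{N}$ with $s^m=s^n$. A diagonal subsemigroup of $S\times S$ is a subsemigroup containing $\{(s,s)\colon s\in S\}$; a congruence is a symmetric and transitive diagonal subsemigroup; $S$ is DSC if every diagonal subsemigroup of $S\times S$ is a congruence on $S$. *)

theory Defs
  imports Main
begin

text \<open>Semigroups are modelled as types of class semigroup_mult (the carrier is the
whole, nonempty, type). Positive powers: spow s n denotes s to the power n+1.\<close>

primrec spow :: "'a::semigroup_mult \<Rightarrow> nat \<Rightarrow> 'a" where
  "spow s 0 = s"
| "spow s (Suc n) = spow s n * s"

definition periodic_sg :: "'a::semigroup_mult itself \<Rightarrow> bool" where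
  "periodic_sg _ \<longleftrightarrow> (\<forall>s::'a. \<exists>m n. m \<noteq> n \<and> spow s m = spow s n)"

definition diagonal_subsemigroup :: "('a::semigroup_mult \<times> 'a) set \<Rightarrow> bool" where
  "diagonal_subsemigroup D \<longleftrightarrow>
     (\<forall>a b c d. (a, b) \<in> D \<longrightarrow> (c, d) \<in> D \<longrightarrow> (a * c, b * d) \<in> D)
     \<and> Id \<subseteq> D"

definition congruence_sg :: "('a::semigroup_mult \<times> 'a) set \<Rightarrow> bool" where
  "congruence_sg D \<longleftrightarrow> diagonal_subsemigroup D \<and> sym D \<and> trans D"

definition DSC :: "'a::semigroup_mult itself \<Rightarrow> bool" where
  "DSC _ \<longleftrightarrow> (\<forall>D :: ('a \<times> 'a) set. diagonal_subsemigroup D \<longrightarrow> congruence_sg D)"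

definition is_group :: "'a::semigroup_mult itself \<Rightarrow> bool" where
  "is_group _ \<longleftrightarrow> (\<exists>e::'a. (\<forall>x. e * x = x \<and> x * e = x) \<and>
                              (\<forall>x. \<exists>y. x * y = e \<and> y * x = e))"

end

theory Submission
  imports Defs
begin

lemma spow_add: "spow s a * spow s b = spow s (a + b + 1)"
  by (induction b) (simp_all add: mult.assoc[symmetric])

lemma spow_Suc_left: "spow s (Suc k) = s * spow s k"
  using spow_add[of s 0 k] by simp

lemma spow_shift:
  assumes "spow s m = spow s n" "m < n" "m \<le> i"
  shows "spow s (i + (n - m)) = spow s i"
proof (cases "i = m")
  case True
  have e: "i + (n - m) = n" using True assms(2) by arith
  have "spow s (i + (n - m)) = spow s n" unfolding e ..
  also have "\<dots> = spow s m" by (rule sym, rule assms(1))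
  also have "\<dots> = spow s i" using True by (rule arg_cong[OF sym])
  finally show ?thesis .
next
  case False
  have "m < i" using False assms(3) by arith
  define j where "j = i - m - 1"
  have j: "i = m + Suc j" using \<open>m < i\<close> unfolding j_def by arith
  have e1: "i + (n - m) = n + j + 1" using j assms(2) by arith
  have "spow s (i + (n - m)) = spow s (n + j + 1)" unfolding e1 ..
  also have "\<dots> = spow s n * spow s j" by (rule spow_add[symmetric])
  also have "\<dots> = spow s m * spow s j" unfolding assms(1) ..
  also have "\<dots> = spow s (m + j + 1)" by (rule spow_add)
  also have "m + j + 1 = i" using j by arith
  finally show ?thesis .
qed

lemma spow_shift_mult:
  assumes "spow s m = spow s n" "m < n" "m \<le> i"
  shows "spow s (i + t * (n - m)) = spow s i"
proof (induction t)
  case 0 then show ?case by simp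
next
  case (Suc t)
  have "i + Suc t * (n - m) = (i + t * (n - m)) + (n - m)" by simp
  then have "spow s (i + Suc t * (n - m)) = spow s ((i + t * (n - m)) + (n - m))"
    by (rule arg_cong)
  also have "\<dots> = spow s (i + t * (n - m))"
    using spow_shift[OF assms(1,2), of "i + t * (n - m)"] assms(3) by simp
  finally show ?case using Suc by simp
qed

lemma periodic_idem:
  assumes "periodic_sg TYPE('a::semigroup_mult)"
  shows "\<exists>k. spow (w::'a) k * spow w k = spow w k"
proof -
  obtain m0 n0 where mn0: "m0 \<noteq> n0" "spow w m0 = spow w n0"
    using assms unfolding periodic_sg_def by blast
  obtain m n where mn: "m < n" "spow w m = spow w n"
  proof (cases "m0 < n0")
    case True then show ?thesis using that mn0 by blast
  next
    case False then have "n0 < m0" using mn0(1) by simp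
    then show ?thesis using that mn0(2) by simp
  qed
  define d where "d = n - m"
  have d: "d \<ge> 1" using mn d_def by simp
  define k where "k = (m + 1) * d - 1"
  have h: "(m+1)*1 \<le> (m+1)*d" using d by (rule mult_le_mono2)
  have km: "k \<ge> m" using h unfolding k_def by simp
  have "k + k + 1 = k + (m + 1) * d" using h unfolding k_def by simp
  then have e2: "k + k + 1 = k + (m+1) * (n - m)" by (simp only: d_def)
  have "spow w k * spow w k = spow w (k + k + 1)" by (rule spow_add)
  also have "\<dots> = spow w (k + (m+1) * (n - m))" unfolding e2 ..
  also have "\<dots> = spow w k" by (rule spow_shift_mult[OF mn(2) mn(1) km])
  finally show ?thesis by blast
qed

lemma right_iter:
  assumes "x = u * x * (w::'a::semigroup_mult)"
  shows "x = spow u n * x * spow w n"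
proof (induction n)
  case 0 then show ?case using assms by simp
next
  case (Suc n)
  have "x = u * x * w" by (rule assms)
  also have "\<dots> = u * (spow u n * x * spow w n) * w"
    using Suc.IH by (rule arg_cong[where f="\<lambda>z. u * z * w"])
  also have "\<dots> = (u * spow u n) * x * (spow w n * w)" by (simp add: mult.assoc)
  finally show ?case unfolding spow_Suc_left[of u n] spow.simps(2)[of w n] .
qed

lemma right_iter1:
  assumes "x = x * (w::'a::semigroup_mult)"
  shows "x = x * spow w n"
proof (induction n)
  case 0 then show ?case using assms by simp
next
  case (Suc n)
  have "x = x * w" by (rule assms)
  also have "\<dots> = x * spow w n * w"
    using Suc.IH by (rule arg_cong[where f="\<lambda>z. z * w"])
  finally have A: "x = x * spow w n * w" .
  have B: "x * spow w (Suc n) = x * spow w n * w" by (simp add: mult.assoc)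
  show ?case by (rule trans[OF A B[symmetric]])
qed

lemma left_iter1:
  assumes "x = (w::'a::semigroup_mult) * x"
  shows "x = spow w n * x"
proof (induction n)
  case 0 then show ?case using assms by simp
next
  case (Suc n)
  have "x = spow w n * x" by (rule Suc.IH)
  also have "\<dots> = spow w n * (w * x)"
    using assms by (rule arg_cong[where f="\<lambda>z. spow w n * z"])
  finally have A: "x = spow w n * (w * x)" .
  have B: "spow w (Suc n) * x = spow w n * (w * x)" by (simp add: mult.assoc)
  show ?case by (rule trans[OF A B[symmetric]])
qed

lemma spow_cases: "spow w k = w \<or> (\<exists>r. spow w k = w * r)"
  by (cases k) (auto simp del: spow.simps(2) simp add: spow_Suc_left)

lemma spow_cases_r: "spow w k = w \<or> (\<exists>r. spow w k = r * w)"
proof (cases k)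
  case 0 then show ?thesis by simp
next
  case (Suc j) then have "spow w k = spow w j * w" by simp
  then show ?thesis by blast
qed

definition Jset :: "'a::semigroup_mult \<Rightarrow> 'a set" where
  "Jset y = {z. z = y \<or> (\<exists>u. z = u*y) \<or> (\<exists>v. z = y*v) \<or> (\<exists>u v. z = u*y*v)}"

lemma Jset_cases:
  assumes "z \<in> Jset y"
  obtains "z = y" | u where "z = u*y" | v where "z = y*v" | u v where "z = u*y*v"
proof -
  have "z = y \<or> (\<exists>u. z = u*y) \<or> (\<exists>v. z = y*v) \<or> (\<exists>u v. z = u*y*v)"
    using assms unfolding Jset_def by (rule CollectD)
  then show ?thesis
    apply (elim disjE exE)
    apply (erule that(1))
    apply (erule that(2))
    apply (erule that(3))
    apply (erule that(4))
    done
qed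

lemma Jset_I1: "y \<in> Jset y"
  unfolding Jset_def by (rule CollectI, rule disjI1, rule refl)
lemma Jset_I2: "u*y \<in> Jset y"
  unfolding Jset_def by (rule CollectI, rule disjI2, rule disjI1, rule exI, rule refl)
lemma Jset_I3: "y*v \<in> Jset y"
  unfolding Jset_def by (rule CollectI, rule disjI2, rule disjI2, rule disjI1, rule exI, rule refl)
lemma Jset_I4: "u*y*v \<in> Jset y"
  unfolding Jset_def by (rule CollectI, rule disjI2, rule disjI2, rule disjI2, rule exI, rule exI, rule refl)

lemma Jset_left:
  assumes "z \<in> Jset y" shows "p * z \<in> Jset y"
  using assms
proof (rule Jset_cases)
  assume h: "z = y"
  have "p * z = p * y" unfolding h ..
  then show ?thesis using Jset_I2[of p y] by (rule ssubst)
next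
  fix u assume h: "z = u * y"
  have "p * z = (p * u) * y" unfolding h mult.assoc ..
  then show ?thesis using Jset_I2[of "p*u" y] by (rule ssubst)
next
  fix v assume h: "z = y * v"
  have "p * z = p * y * v" unfolding h mult.assoc ..
  then show ?thesis using Jset_I4[of p y v] by (rule ssubst)
next
  fix u v assume h: "z = u * y * v"
  have "p * z = (p * u) * y * v" unfolding h mult.assoc ..
  then show ?thesis using Jset_I4[of "p*u" y v] by (rule ssubst)
qed

lemma Jset_right:
  assumes "z \<in> Jset y" shows "z * p \<in> Jset y"
  using assms
proof (rule Jset_cases)
  assume h: "z = y"
  have "z * p = y * p" unfolding h ..
  then show ?thesis using Jset_I3[of y p] by (rule ssubst)
next
  fix u assume h: "z = u * y"
  have "z * p = u * y * p" unfolding h mult.assoc ..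
  then show ?thesis using Jset_I4[of u y p] by (rule ssubst)
next
  fix v assume h: "z = y * v"
  have "z * p = y * (v * p)" unfolding h mult.assoc ..
  then show ?thesis using Jset_I3[of y "v*p"] by (rule ssubst)
next
  fix u v assume h: "z = u * y * v"
  have "z * p = u * y * (v * p)" unfolding h mult.assoc ..
  then show ?thesis using Jset_I4[of u y "v*p"] by (rule ssubst)
qed

lemma Jset_self: "y \<in> Jset y" by (rule Jset_I1)

lemma DSC_simple:
  assumes "DSC TYPE('a::semigroup_mult)"
  shows "(z::'a) \<in> Jset a"
proof -
  define D where "D = Id \<union> (Jset a \<times> (UNIV :: 'a set))"
  have "diagonal_subsemigroup D"
    unfolding diagonal_subsemigroup_def D_def
    using Jset_left Jset_right by blast
  then have "sym D" using assms unfolding DSC_def congruence_sg_def by blast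
  moreover have "(a, z) \<in> D" unfolding D_def using Jset_self by blast
  ultimately have "(z, a) \<in> D" by (meson symD)
  then show ?thesis unfolding D_def using Jset_self by blast
qed

definition Rdiv :: "'a::semigroup_mult \<Rightarrow> 'a \<Rightarrow> bool" where
  "Rdiv y x \<longleftrightarrow> x = y \<or> (\<exists>r. x = y * r)"

definition Ldiv :: "'a::semigroup_mult \<Rightarrow> 'a \<Rightarrow> bool" where
  "Ldiv y x \<longleftrightarrow> x = y \<or> (\<exists>r. x = r * y)"

lemma Rdiv_trans: "Rdiv a b \<Longrightarrow> Rdiv b c \<Longrightarrow> Rdiv a c"
  unfolding Rdiv_def by (elim disjE exE) (auto simp: mult.assoc)

lemma Ldiv_trans: "Ldiv a b \<Longrightarrow> Ldiv b c \<Longrightarrow> Ldiv a c"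
  unfolding Ldiv_def by (elim disjE exE) (auto simp: mult.assoc[symmetric])

lemma spow_yq:
  assumes "W = y \<or> (\<exists>v. W = y * v)"
  shows "spow W k = y \<or> (\<exists>q. spow W k = y * q)"
proof -
  have "spow W k = W \<or> (\<exists>r. spow W k = W * r)" by (rule spow_cases)
  then show ?thesis
  proof
    assume h: "spow W k = W"
    show ?thesis using assms
    proof
      assume "W = y" then show ?thesis using h by simp
    next
      assume "\<exists>v. W = y * v" then obtain v where "W = y * v" by blast
      then show ?thesis using h by blast
    qed
  next
    assume "\<exists>r. spow W k = W * r" then obtain r where h: "spow W k = W * r" by blast
    show ?thesis using assms
    proof
      assume "W = y" then show ?thesis using h by blast
    next
      assume "\<exists>v. W = y * v" then obtain v where "W = y * v" by blast
      then have "spow W k = y * (v * r)" using h by (simp add: mult.assoc)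
      then show ?thesis by blast
    qed
  qed
qed

lemma spow_qy:
  assumes "W = y \<or> (\<exists>v. W = v * y)"
  shows "spow W k = y \<or> (\<exists>q. spow W k = q * y)"
proof -
  have "spow W k = W \<or> (\<exists>r. spow W k = r * W)" by (rule spow_cases_r)
  then show ?thesis
  proof
    assume h: "spow W k = W"
    show ?thesis using assms
    proof
      assume "W = y" then show ?thesis using h by simp
    next
      assume "\<exists>v. W = v * y" then obtain v where "W = v * y" by blast
      then show ?thesis using h by blast
    qed
  next
    assume "\<exists>r. spow W k = r * W" then obtain r where h: "spow W k = r * W" by blast
    show ?thesis using assms
    proof
      assume "W = y" then show ?thesis using h by blast
    next
      assume "\<exists>v. W = v * y" then obtain v where "W = v * y" by blast
      then have "spow W k = (r * v) * y" using h by (simp add: mult.assoc)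
      then show ?thesis by blast
    qed
  qed
qed

lemma stepB:
  assumes "DSC TYPE('a::semigroup_mult)" "periodic_sg TYPE('a)"
  shows "Rdiv ((x::'a) * y) x"
proof -
  have J: "x \<in> Jset (x * y)" using DSC_simple[OF assms(1)] .
  obtain W where W: "x = x * W \<or> (\<exists>u. x = u * x * W)" "W = y \<or> (\<exists>v. W = y * v)"
  proof (rule Jset_cases[OF J])
    assume h: "x = x * y" show ?thesis
      by (rule that[of y], rule disjI1, rule h, rule disjI1, rule refl)
  next
    fix u assume h: "x = u * (x * y)"
    have h': "x = u * x * y" using h unfolding mult.assoc .
    show ?thesis by (rule that[of y], rule disjI2, rule exI, rule h', rule disjI1, rule refl)
  next
    fix v assume h: "x = x * y * v"
    have h': "x = x * (y * v)" using h unfolding mult.assoc .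
    show ?thesis by (rule that[of "y*v"], rule disjI1, rule h', rule disjI2, rule exI, rule refl)
  next
    fix u v assume h: "x = u * (x * y) * v"
    have h': "x = u * x * (y * v)" using h unfolding mult.assoc .
    show ?thesis by (rule that[of "y*v"], rule disjI2, rule exI, rule h', rule disjI2, rule exI, rule refl)
  qed
  obtain k where k: "spow W k * spow W k = spow W k" using periodic_idem[OF assms(2)] by blast
  have xk: "x = x * spow W k"
    using W(1)
  proof
    assume "x = x * W" then show ?thesis by (rule right_iter1)
  next
    assume "\<exists>u. x = u * x * W"
    then obtain u where "x = u * x * W" by blast
    then have e: "x = spow u k * x * spow W k" by (rule right_iter)
    have "x * spow W k = (spow u k * x * spow W k) * spow W k"
      using e by (rule arg_cong[where f="\<lambda>z. z * spow W k"])
    also have "\<dots> = spow u k * x * (spow W k * spow W k)" by (simp only: mult.assoc)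
    also have "\<dots> = spow u k * x * spow W k" by (simp only: k)
    also have "\<dots> = x" using e by (rule sym)
    finally show ?thesis by (rule sym)
  qed
  have "spow W k = y \<or> (\<exists>q. spow W k = y * q)" using W(2) by (rule spow_yq)
  then show ?thesis
  proof
    assume hy: "spow W k = y" have h: "x = x * y" using xk unfolding hy .
    show ?thesis unfolding Rdiv_def by (rule disjI1, rule h)
  next
    assume "\<exists>q. spow W k = y * q" then obtain q where "spow W k = y * q" by blast
    note hq = this
    have h: "x = x * y * q" using xk unfolding hq mult.assoc .
    show ?thesis unfolding Rdiv_def by (rule disjI2, rule exI, rule h)
  qed
qed

lemma stepL:
  assumes "DSC TYPE('a::semigroup_mult)" "periodic_sg TYPE('a)"
  shows "Ldiv ((y::'a) * x) x"
proof -
  have J: "x \<in> Jset (y * x)" using DSC_simple[OF assms(1)] .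
  obtain W where W: "x = W * x \<or> (\<exists>u. x = W * x * u)" "W = y \<or> (\<exists>v. W = v * y)"
  proof (rule Jset_cases[OF J])
    assume h: "x = y * x" show ?thesis
      by (rule that[of y], rule disjI1, rule h, rule disjI1, rule refl)
  next
    fix u assume h: "x = u * (y * x)"
    have h': "x = (u * y) * x" using h unfolding mult.assoc .
    show ?thesis by (rule that[of "u*y"], rule disjI1, rule h', rule disjI2, rule exI, rule refl)
  next
    fix v assume h: "x = y * x * v"
    show ?thesis by (rule that[of y], rule disjI2, rule exI, rule h, rule disjI1, rule refl)
  next
    fix u v assume h: "x = u * (y * x) * v"
    have h': "x = (u * y) * x * v" using h unfolding mult.assoc .
    show ?thesis by (rule that[of "u*y"], rule disjI2, rule exI, rule h', rule disjI2, rule exI, rule refl)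
  qed
  obtain k where k: "spow W k * spow W k = spow W k" using periodic_idem[OF assms(2)] by blast
  have xk: "x = spow W k * x"
    using W(1)
  proof
    assume "x = W * x" then show ?thesis by (rule left_iter1)
  next
    assume "\<exists>u. x = W * x * u"
    then obtain u where "x = W * x * u" by blast
    then have e: "x = spow W k * x * spow u k" by (rule right_iter)
    have "spow W k * x = spow W k * (spow W k * x * spow u k)"
      using e by (rule arg_cong[where f="\<lambda>z. spow W k * z"])
    also have "\<dots> = (spow W k * spow W k) * x * spow u k" by (simp only: mult.assoc)
    also have "\<dots> = spow W k * x * spow u k" by (simp only: k)
    also have "\<dots> = x" using e by (rule sym)
    finally show ?thesis by (rule sym)
  qed
  have "spow W k = y \<or> (\<exists>q. spow W k = q * y)" using W(2) by (rule spow_qy)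
  then show ?thesis
  proof
    assume hy: "spow W k = y" have h: "x = y * x" using xk unfolding hy .
    show ?thesis unfolding Ldiv_def by (rule disjI1, rule h)
  next
    assume "\<exists>q. spow W k = q * y" then obtain q where "spow W k = q * y" by blast
    note hq = this
    have h: "x = q * (y * x)" using xk unfolding hq mult.assoc .
    show ?thesis unfolding Ldiv_def by (rule disjI2, rule exI, rule h)
  qed
qed

definition RR :: "'a::semigroup_mult \<Rightarrow> 'a \<Rightarrow> bool" where
  "RR p q \<longleftrightarrow> Rdiv p q \<and> Rdiv q p"

definition LL :: "'a::semigroup_mult \<Rightarrow> 'a \<Rightarrow> bool" where
  "LL p q \<longleftrightarrow> Ldiv p q \<and> Ldiv q p"

lemma RR_trans: "RR x y \<Longrightarrow> RR y z \<Longrightarrow> RR x z"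
  unfolding RR_def using Rdiv_trans by blast
lemma RR_sym: "RR x y \<Longrightarrow> RR y x"
  unfolding RR_def by blast
lemma RR_refl: "RR x x"
  unfolding RR_def Rdiv_def by (rule conjI; rule disjI1; rule refl)
lemma LL_trans: "LL x y \<Longrightarrow> LL y z \<Longrightarrow> LL x z"
  unfolding LL_def using Ldiv_trans by blast
lemma LL_sym: "LL x y \<Longrightarrow> LL y x"
  unfolding LL_def by blast
lemma LL_refl: "LL x x"
  unfolding LL_def Ldiv_def by (rule conjI; rule disjI1; rule refl)

lemma Rdiv_mult: "Rdiv p (p * r)"
  unfolding Rdiv_def by (rule disjI2, rule exI, rule refl)
lemma Ldiv_mult: "Ldiv p (r * p)"
  unfolding Ldiv_def by (rule disjI2, rule exI, rule refl)

lemma allR: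
  assumes "DSC TYPE('a::semigroup_mult)" "periodic_sg TYPE('a)"
  shows "Rdiv (a::'a) b"
proof -
  have Rp: "RR (p * r) p" for p r :: 'a
    unfolding RR_def using stepB[OF assms, of p r] Rdiv_mult[of p r] by (rule conjI)
  define D where "D = {(p, q). RR p q \<or> (RR p a \<and> RR q b)}"
  have "diagonal_subsemigroup D"
    unfolding diagonal_subsemigroup_def
  proof (intro conjI allI impI subsetI)
    fix p q r s :: 'a
    assume "(p, q) \<in> D"
    then have h: "RR p q \<or> (RR p a \<and> RR q b)" unfolding D_def by simp
    have "RR (p * r) (q * s) \<or> (RR (p * r) a \<and> RR (q * s) b)"
      using h
    proof
      assume "RR p q"
      then have "RR (p * r) (q * s)"
        using RR_trans[OF RR_trans[OF Rp[of p r]] RR_sym[OF Rp[of q s]]] by blast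
      then show ?thesis by (rule disjI1)
    next
      assume "RR p a \<and> RR q b"
      then have "RR (p * r) a \<and> RR (q * s) b"
        using RR_trans[OF Rp[of p r]] RR_trans[OF Rp[of q s]] by blast
      then show ?thesis by (rule disjI2)
    qed
    then show "(p * r, q * s) \<in> D" unfolding D_def by simp
  next
    fix z :: "'a \<times> 'a" assume "z \<in> Id"
    then obtain x where "z = (x, x)" by (rule IdE)
    then show "z \<in> D" unfolding D_def using RR_refl[of x] by simp
  qed
  then have "sym D" using assms unfolding DSC_def congruence_sg_def by blast
  moreover have "(a, b) \<in> D" unfolding D_def using RR_refl[of a] RR_refl[of b] by simp
  ultimately have "(b, a) \<in> D" by (rule symD)
  then have "RR b a \<or> (RR b a \<and> RR a b)" unfolding D_def by simp
  then have "RR b a" by blast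
  then show ?thesis unfolding RR_def by blast
qed

lemma allL:
  assumes "DSC TYPE('a::semigroup_mult)" "periodic_sg TYPE('a)"
  shows "Ldiv (a::'a) b"
proof -
  have Rp: "LL (q * p) p" for q p :: 'a
    unfolding LL_def using stepL[OF assms, of q p] Ldiv_mult[of p q] by (rule conjI)
  define D where "D = {(p, q). LL p q \<or> (LL p a \<and> LL q b)}"
  have "diagonal_subsemigroup D"
    unfolding diagonal_subsemigroup_def
  proof (intro conjI allI impI subsetI)
    fix p q r s :: 'a
    assume "(r, s) \<in> D"
    then have h: "LL r s \<or> (LL r a \<and> LL s b)" unfolding D_def by simp
    have "LL (p * r) (q * s) \<or> (LL (p * r) a \<and> LL (q * s) b)"
      using h
    proof
      assume "LL r s"
      then have "LL (p * r) (q * s)"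
        using LL_trans[OF LL_trans[OF Rp[of p r]] LL_sym[OF Rp[of q s]]] by blast
      then show ?thesis by (rule disjI1)
    next
      assume "LL r a \<and> LL s b"
      then have "LL (p * r) a \<and> LL (q * s) b"
        using LL_trans[OF Rp[of p r]] LL_trans[OF Rp[of q s]] by blast
      then show ?thesis by (rule disjI2)
    qed
    then show "(p * r, q * s) \<in> D" unfolding D_def by simp
  next
    fix z :: "'a \<times> 'a" assume "z \<in> Id"
    then obtain x where "z = (x, x)" by (rule IdE)
    then show "z \<in> D" unfolding D_def using LL_refl[of x] by simp
  qed
  then have "sym D" using assms unfolding DSC_def congruence_sg_def by blast
  moreover have "(a, b) \<in> D" unfolding D_def using LL_refl[of a] LL_refl[of b] by simp
  ultimately have "(b, a) \<in> D" by (rule symD)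
  then have "LL b a \<or> (LL b a \<and> LL a b)" unfolding D_def by simp
  then have "LL b a" by blast
  then show ?thesis unfolding LL_def by blast
qed

lemma DSC_group:
  assumes "DSC TYPE('a::semigroup_mult)" "periodic_sg TYPE('a)"
  shows "is_group TYPE('a)"
proof -
  obtain k where k: "spow (undefined::'a) k * spow undefined k = spow undefined k"
    using periodic_idem[OF assms(2)] by (rule exE)
  define e where "e = spow (undefined::'a) k"
  have ee: "e * e = e" unfolding e_def by (rule k)
  have el: "e * x = x" for x
  proof -
    have "Rdiv e x" by (rule allR[OF assms])
    then have "x = e \<or> (\<exists>r. x = e * r)" unfolding Rdiv_def .
    then show ?thesis
    proof
      assume h: "x = e" show ?thesis unfolding h by (rule ee)
    next
      assume "\<exists>r. x = e * r" then obtain r where h: "x = e * r" by (rule exE)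
      have "e * (e * r) = (e * e) * r" by (simp only: mult.assoc)
      also have "\<dots> = e * r" by (simp only: ee)
      finally show ?thesis unfolding h .
    qed
  qed
  have er: "x * e = x" for x
  proof -
    have "Ldiv e x" by (rule allL[OF assms])
    then have "x = e \<or> (\<exists>r. x = r * e)" unfolding Ldiv_def .
    then show ?thesis
    proof
      assume h: "x = e" show ?thesis unfolding h by (rule ee)
    next
      assume "\<exists>r. x = r * e" then obtain r where h: "x = r * e" by (rule exE)
      have "(r * e) * e = r * (e * e)" by (simp only: mult.assoc)
      also have "\<dots> = r * e" by (simp only: ee)
      finally show ?thesis unfolding h .
    qed
  qed
  have inv: "\<exists>y. x * y = e \<and> y * x = e" for x
  proof -
    obtain y where y: "x * y = e"
    proof -
      have "Rdiv x e" by (rule allR[OF assms])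
      then have "e = x \<or> (\<exists>r. e = x * r)" unfolding Rdiv_def .
      then show ?thesis
      proof
        assume h: "e = x" show ?thesis by (rule that[of e], unfold h[symmetric], rule ee)
      next
        assume "\<exists>r. e = x * r" then obtain r where h: "e = x * r" by (rule exE)
        show ?thesis by (rule that[of r], rule sym, rule h)
      qed
    qed
    obtain z where z: "z * x = e"
    proof -
      have "Ldiv x e" by (rule allL[OF assms])
      then have "e = x \<or> (\<exists>r. e = r * x)" unfolding Ldiv_def .
      then show ?thesis
      proof
        assume h: "e = x" show ?thesis by (rule that[of e], unfold h[symmetric], rule ee)
      next
        assume "\<exists>r. e = r * x" then obtain r where h: "e = r * x" by (rule exE)
        show ?thesis by (rule that[of r], rule sym, rule h)
      qed
    qed
    have "z = z * e" by (rule sym, rule er)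
    also have "\<dots> = z * (x * y)" by (simp only: y)
    also have "\<dots> = (z * x) * y" by (simp only: mult.assoc)
    also have "\<dots> = e * y" by (simp only: z)
    also have "\<dots> = y" by (rule el)
    finally have "z = y" .
    then have "y * x = e" using z by simp
    then show ?thesis using y by blast
  qed
  show ?thesis unfolding is_group_def using el er inv by blast
qed

lemma group_DSC:
  assumes "periodic_sg TYPE('a::semigroup_mult)" "is_group TYPE('a)"
  shows "DSC TYPE('a)"
  unfolding DSC_def
proof (intro allI impI)
  obtain e :: 'a where e: "\<forall>x. e * x = x \<and> x * e = x" "\<forall>x. \<exists>y. x * y = e \<and> y * x = e"
    using assms(2) unfolding is_group_def by (elim exE conjE)
  have eL: "e * x = x" for x using e(1) by blast
  have eR: "x * e = x" for x using e(1) by blast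
  have einv: "\<exists>y. x * y = e \<and> y * x = e" for x using e(2) by (rule spec)
  fix D :: "('a \<times> 'a) set"
  assume D: "diagonal_subsemigroup D"
  have mul: "(a, b) \<in> D \<Longrightarrow> (c, d) \<in> D \<Longrightarrow> (a * c, b * d) \<in> D" for a b c d
    using D unfolding diagonal_subsemigroup_def by blast
  have diag: "(a, a) \<in> D" for a using D unfolding diagonal_subsemigroup_def by blast
  have tr: "trans D"
  proof (rule transI)
    fix a b c assume ab: "(a, b) \<in> D" and bc: "(b, c) \<in> D"
    obtain ib where ib: "b * ib = e \<and> ib * b = e" using einv[of b] by (rule exE)
    have h: "(a * ib * b, b * ib * c) \<in> D" using mul[OF mul[OF ab diag[of ib]] bc] .
    have h1: "a * ib * b = a"
    proof -
      have "a * ib * b = a * (ib * b)" by (simp only: mult.assoc)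
      also have "\<dots> = a * e" using ib by simp
      also have "\<dots> = a" by (rule eR)
      finally show ?thesis .
    qed
    have h2: "b * ib * c = c"
    proof -
      have "b * ib * c = e * c" using ib by simp
      also have "\<dots> = c" by (rule eL)
      finally show ?thesis .
    qed
    show "(a, c) \<in> D" using h unfolding h1 h2 .
  qed
  have sy: "sym D"
  proof (rule symI)
    fix a b assume ab: "(a, b) \<in> D"
    obtain ib where ib: "b * ib = e \<and> ib * b = e" using einv[of b] by (rule exE)
    define c where "c = a * ib"
    have ce: "(c, e) \<in> D" using mul[OF ab diag[of ib]] unfolding c_def using ib by simp
    have pw: "(spow c n, e) \<in> D" for n
    proof (induction n)
      case 0 show ?case using ce by simp
    next
      case (Suc n)
      have "(spow c n * c, e * e) \<in> D" by (rule mul[OF Suc.IH ce])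
      then show ?case unfolding eL by simp
    qed
    obtain m0 n0 where mn0: "m0 \<noteq> n0" "spow c m0 = spow c n0"
      using assms(1) unfolding periodic_sg_def by blast
    obtain m n where mn: "m < n" "spow c m = spow c n"
    proof (cases "m0 < n0")
      case True then show ?thesis using that mn0 by blast
    next
      case False then have "n0 < m0" using mn0(1) by simp
      then show ?thesis using that mn0(2) by simp
    qed
    define P where "P = spow c (n - m - 1)"
    have ar: "m + (n - m - 1) + 1 = n" using mn(1) by arith
    have "spow c m * P = spow c (m + (n - m - 1) + 1)" unfolding P_def by (rule spow_add)
    also have "\<dots> = spow c n" unfolding ar ..
    also have "\<dots> = spow c m" by (rule sym, rule mn(2))
    finally have gP: "spow c m * P = spow c m" .
    obtain g' where g': "spow c m * g' = e \<and> g' * spow c m = e" using einv[of "spow c m"] by (rule exE)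
    have "P = e * P" by (rule sym, rule eL)
    also have "\<dots> = (g' * spow c m) * P" using g' by simp
    also have "\<dots> = g' * (spow c m * P)" by (simp only: mult.assoc)
    also have "\<dots> = g' * spow c m" unfolding gP ..
    also have "\<dots> = e" using g' by simp
    finally have Pe: "P = e" .
    show "(b, a) \<in> D"
    proof (cases "n - m - 1")
      case 0
      have "c = P" unfolding P_def 0 by simp
      then have ceq: "c = e" unfolding Pe .
      have "a = a * e" by (rule sym, rule eR)
      also have "\<dots> = a * (ib * b)" using ib by simp
      also have "\<dots> = c * b" unfolding c_def by (simp only: mult.assoc)
      also have "\<dots> = b" unfolding ceq by (rule eL)
      finally have "a = b" .
      then show ?thesis using diag by simp
    next
      case (Suc j)
      define t where "t = spow c j"
      have "c * t = P" unfolding P_def t_def Suc by (rule spow_Suc_left[symmetric])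
      then have t: "c * t = e" unfolding Pe .
      have tc: "t * c = e"
      proof -
        obtain c' where c': "c * c' = e \<and> c' * c = e" using einv[of c] by (rule exE)
        have "c' = c' * e" by (rule sym, rule eR)
        also have "\<dots> = c' * (c * t)" unfolding t ..
        also have "\<dots> = (c' * c) * t" by (simp only: mult.assoc)
        also have "\<dots> = e * t" using c' by simp
        also have "\<dots> = t" by (rule eL)
        finally have "c' = t" .
        then show ?thesis using c' by simp
      qed
      have ta: "t * a = b"
      proof -
        have "t * a = t * a * e" by (rule sym, rule eR)
        also have "\<dots> = t * a * (ib * b)" using ib by simp
        also have "\<dots> = (t * c) * b" unfolding c_def by (simp only: mult.assoc)
        also have "\<dots> = e * b" unfolding tc ..
        also have "\<dots> = b" by (rule eL)
        finally show ?thesis .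
      qed
      have "(t * a, e * a) \<in> D" using mul[OF pw[of j] diag[of a]] unfolding t_def .
      then show ?thesis unfolding ta eL .
    qed
  qed
  show "congruence_sg D" unfolding congruence_sg_def using D tr sy by blast
qed

theorem mainTheorem6:
  assumes "periodic_sg TYPE('a::semigroup_mult)"
  shows "DSC TYPE('a) \<longleftrightarrow> is_group TYPE('a)"
proof
  assume "DSC TYPE('a)" then show "is_group TYPE('a)" using assms by (rule DSC_group)
next
  assume "is_group TYPE('a)" then show "DSC TYPE('a)" using assms by (intro group_DSC)
qed

end
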